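(* Let $\mathcal{T}_4$ be the set of $s\in\mathcal{A}^*$ with $|s|\ne\mathsf{rmin}(s)+1$, $0\ne\mathrm{sebr}(s)<\mathrm{Rmin}(s)_{\mathsf{rpos}(s)+1}$, and whose last entry $s_{|s|}$ is not an $\mathcal{M}$asc. Let $\mathcal{P}_1$ be the set of $s\in\mathcal{A}^*$ with $s_{|s|-1}<s_{|s|}=\mathsf{asc}(s)$ and $\mathcal{P}_1^c=\mathcal{A}^*\setminus\mathcal{P}_1$. For every $n$ there is a bijection $f_4:\mathcal{T}_4\cap\mathcal{A}_n\to\{s\in\mathcal{A}_n\cap\mathcal{P}_1^c:\mathsf{rpos}(s)\ne0\}$ such that for all $s$: $\mathsf{asc}(s)=\mathsf{asc}(f_4(s))$, $\mathsf{rep}(s)=\mathsf{rep}(f_4(s))$, $\mathsf{max}(s)=\mathsf{max}(f_4(s))$, $\mathsf{rmin}(s)=\mathsf{rmin}(f_4(s))-1$, $\mathsf{rpos}(s)=\mathsf{rpos}(f_4(s))-1$, $\mathsf{zero}(s)=\mathsf{zero}(f_4(s))+\chi(\mathsf{rpos}(s)=0)$ and $\mathsf{ealm}(s)=\mathsf{ealm}(f_4(s))-\chi(\mathrm{Prm}(s)_{\mathsf{rpos}(s)}=\mathsf{max}(s)+1)$.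
   Context: For a sequence $s$, $\mathsf{asc}(s)=|\{i:s_i<s_{i+1}\}|$. An ascent sequence is a sequence $s=(s_1,\dots,s_n)$ of non-negative integers with $s_1=0$, $s_i\le\mathsf{asc}(s_1,\dots,s_{i-1})+1$ for $i\ge2$; $\mathcal{A}_n$ is the set of those of length $n$, $|s|$ the length; $\mathcal{A}^*$ is the set of all ascent sequences except those of the form $(0,1,\dots,|s|-1)$. $\mathsf{rep}(s)=|s|-|\{s_i\}|$; $\mathsf{zero}(s)=|\{i:s_i=0\}|$; $\mathsf{max}(s)=|\{i:s_i=i-1\}|$; $\mathsf{ealm}(s)=s_{\mathsf{max}(s)+1}$ if $\mathsf{max}(s)\ne|s|$, else $0$. A right-to-left minimum is an entry $s_i$ with $s_i<s_j$ for all $j>i$; $\mathsf{rmin}(s)$ is their number; they are indexed $0,\dots,\mathsf{rmin}(s)-1$ from left to right, with values $\mathrm{Rmin}(s)_m$ and positions $\mathrm{Prm}(s)_m$. $\mathsf{rpos}(s)$: $0$ if $\mathsf{rmin}(s)=|s|$; otherwise the maximal $m$ such that the value $\mathrm{Rmin}(s)_m$ occurs at least twice after position $\mathrm{Prm}(s)_{m-1}$ (for $m=0$: at least twice in $s$), and $0$ if none. $\mathrm{sebr}(s)$ is the smallest entry strictly between the two rightmost occurrences of $\mathrm{Rmin}(s)_{\mathsf{rpos}(s)}$, and $0$ if they are adjacent; when $\mathsf{rpos}(s)=\mathsf{rmin}(s)-1$ one always regards $\mathrm{sebr}(s)<\mathrm{Rmin}(s)_{\mathsf{rpos}(s)+1}$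 as true. An entry $s_i$ is an $\mathcal{M}$asc if $s_i=\mathsf{asc}(s_1,\dots,s_{i-1})+1$. $\chi(P)=1$ if $P$ holds, else $0$. *)

theory Defs
  imports Main
begin

text \<open>Sequences are lists of naturals; list index i (0-based) corresponds to
  paper position i+1.\<close>

definition asc :: "nat list \<Rightarrow> nat" where
  "asc s = card {i. i + 1 < length s \<and> s ! i < s ! (i + 1)}"

definition ascent_seq :: "nat list \<Rightarrow> bool" where
  "ascent_seq s \<longleftrightarrow> s \<noteq> [] \<and> s ! 0 = 0 \<and>
     (\<forall>i. 1 \<le> i \<and> i < length s \<longrightarrow> s ! i \<le> asc (take i s) + 1)"

definition Aset :: "nat \<Rightarrow> nat list set" where
  "Aset n = {s. ascent_seq s \<and> length s = n}"

definition Astar :: "nat list set" where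
  "Astar = {s. ascent_seq s \<and> s \<noteq> [0..<length s]}"

definition rep :: "nat list \<Rightarrow> nat" where
  "rep s = length s - card (set s)"

definition zero :: "nat list \<Rightarrow> nat" where
  "zero s = card {i. i < length s \<and> s ! i = 0}"

definition maxst :: "nat list \<Rightarrow> nat" where
  "maxst s = card {i. i < length s \<and> s ! i = i}"

definition ealm :: "nat list \<Rightarrow> nat" where
  "ealm s = (if maxst s \<noteq> length s then s ! (maxst s) else 0)"

definition rmin_positions :: "nat list \<Rightarrow> nat list" where
  "rmin_positions s = sorted_list_of_set
     {i. i < length s \<and> (\<forall>j. i < j \<and> j < length s \<longrightarrow> s ! i < s ! j)}"

definition rmin :: "nat list \<Rightarrow> nat" where
  "rmin s = length (rmin_positions s)"

definition Prm :: "nat list \<Rightarrow> nat \<Rightarrow> nat" where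
  "Prm s m = rmin_positions s ! m"

definition Rmin :: "nat list \<Rightarrow> nat \<Rightarrow> nat" where
  "Rmin s m = s ! (Prm s m)"

definition rpos_cond :: "nat list \<Rightarrow> nat \<Rightarrow> bool" where
  "rpos_cond s m \<longleftrightarrow>
     2 \<le> card {j. j < length s \<and> (m = 0 \<or> Prm s (m - 1) < j) \<and> s ! j = Rmin s m}"

definition rpos :: "nat list \<Rightarrow> nat" where
  "rpos s = (if rmin s = length s then 0
             else if \<exists>m < rmin s. rpos_cond s m
                  then (GREATEST m. m < rmin s \<and> rpos_cond s m) else 0)"

text \<open>Smallest entry strictly between the two rightmost occurrences of
  Rmin_{rpos}; 0 if they are adjacent (and, by convention, 0 if there are
  fewer than two occurrences).\<close>
definition sebr :: "nat list \<Rightarrow> nat" where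
  "sebr s = (let v = Rmin s (rpos s);
                 Occ = {j. j < length s \<and> s ! j = v} in
             if card Occ < 2 then 0 else
             (let j2 = Max Occ; j1 = Max (Occ - {j2}) in
              if j1 + 1 = j2 then 0 else Min {s ! k | k. j1 < k \<and> k < j2}))"

text \<open>sebr(s) < Rmin(s)_{rpos(s)+1}, regarded true when rpos(s) = rmin(s) - 1.\<close>
definition sebr_lt :: "nat list \<Rightarrow> bool" where
  "sebr_lt s \<longleftrightarrow> rpos s + 1 = rmin s \<or> sebr s < Rmin s (rpos s + 1)"

definition last_Masc :: "nat list \<Rightarrow> bool" where
  "last_Masc s \<longleftrightarrow> last s = asc (butlast s) + 1"

definition T4 :: "nat list set" where
  "T4 = {s \<in> Astar. length s \<noteq> rmin s + 1 \<and> sebr s \<noteq> 0 \<and> sebr_lt s \<and> \<not> last_Masc s}"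

definition P1 :: "nat list set" where
  "P1 = {s \<in> Astar. s ! (length s - 2) < s ! (length s - 1) \<and> s ! (length s - 1) = asc s}"

definition P1c :: "nat list set" where
  "P1c = Astar - P1"

end

theory Submission
  imports Defs
begin

definition idx :: "nat set \<Rightarrow> nat \<Rightarrow> nat" where
  "idx A x = card {y\<in>A. y < x}"

lemma sl_nth_idx:
  assumes "finite A" "x \<in> A"
  shows "sorted_list_of_set A ! idx A x = x"
proof -
  let ?L = "sorted_list_of_set A"
  have ss: "sorted_wrt (<) ?L" by simp
  have dist: "distinct ?L" by simp
  have set: "set ?L = A" using assms by simp
  obtain i where i: "i < length ?L" "?L ! i = x" by (metis assms(2) in_set_conv_nth set)
  have eq: "{y\<in>A. y<x} = (\<lambda>j. ?L!j) ` {..<i}"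
  proof
    show "{y\<in>A. y<x} \<subseteq> (\<lambda>j. ?L!j) ` {..<i}"
    proof
      fix y assume y: "y \<in> {y\<in>A. y<x}"
      then obtain j where j: "j < length ?L" "?L ! j = y" by (metis (no_types, lifting) in_set_conv_nth mem_Collect_eq set)
      have "j < i"
      proof (rule ccontr)
        assume "\<not> j < i"
        then have "i = j \<or> i < j" by auto
        then have "?L!i \<le> ?L!j" using sorted_wrt_nth_less[OF ss, of i j] j by fastforce
        then show False using y i j by auto
      qed
      then show "y \<in> (\<lambda>j. ?L!j) ` {..<i}" using j by auto
    qed
    show "(\<lambda>j. ?L!j) ` {..<i} \<subseteq> {y\<in>A. y<x}"
      using sorted_wrt_nth_less[OF ss] i set nth_mem by fastforce
  qed
  have "inj_on (\<lambda>j. ?L!j) {..<i}" using dist i by (simp add: inj_on_def nth_eq_iff_index_eq)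
  then have "idx A x = i" unfolding idx_def eq by (simp add: card_image)
  then show ?thesis using i by simp
qed

lemma idx_less_card:
  assumes "finite A" "x \<in> A" shows "idx A x < card A"
  unfolding idx_def using assms by (intro psubset_card_mono) auto

lemma idx_mono:
  assumes "finite A" "x \<in> A" "x < y" shows "idx A x < idx A y"
  unfolding idx_def using assms by (intro psubset_card_mono) auto

lemma idx_mono_le:
  assumes "finite A" "x \<le> y" shows "idx A x \<le> idx A y"
  unfolding idx_def using assms by (intro card_mono) auto

lemma idx_inj:
  assumes "finite A" "x \<in> A" "y \<in> A" "idx A x = idx A y" shows "x = y"
  using idx_mono[OF assms(1,2)] idx_mono[OF assms(1,3)] assms(4) by (metis less_irrefl nat_neq_iff)

lemma nth_idx:
  assumes "finite A" "k < card A"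
  shows "sorted_list_of_set A ! k \<in> A" "idx A (sorted_list_of_set A ! k) = k"
proof -
  let ?L = "sorted_list_of_set A"
  show m: "?L ! k \<in> A" using assms by (metis length_sorted_list_of_set nth_mem set_sorted_list_of_set)
  have "?L ! idx A (?L ! k) = ?L ! k" using sl_nth_idx[OF assms(1) m] .
  moreover have "idx A (?L ! k) < length ?L" using idx_less_card[OF assms(1) m] by simp
  ultimately show "idx A (?L ! k) = k" using assms distinct_sorted_list_of_set
    by (simp add: nth_eq_iff_index_eq)
qed

lemma nth_eq_iff:
  assumes "finite A" "k < card A"
  shows "sorted_list_of_set A ! k = y \<longleftrightarrow> y \<in> A \<and> idx A y = k"
  using nth_idx[OF assms] sl_nth_idx[OF assms(1)] by auto

lemma shift:
  assumes fin: "finite A" and B: "B = insert x A" and xA: "x \<notin> A" and r: "idx A x = r"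
  shows "card B = Suc (card A)"
    "\<And>k. k < r \<Longrightarrow> sorted_list_of_set B ! k = sorted_list_of_set A ! k"
    "sorted_list_of_set B ! r = x"
    "\<And>k. r \<le> k \<Longrightarrow> k < card A \<Longrightarrow> sorted_list_of_set B ! Suc k = sorted_list_of_set A ! k"
proof -
  have finB: "finite B" using fin B by simp
  show cB: "card B = Suc (card A)" using B fin xA by simp
  have rle: "r \<le> card A" unfolding r[symmetric] idx_def using fin by (intro card_mono) auto
  show "sorted_list_of_set B ! r = x"
  proof -
    have "idx B x = idx A x" unfolding idx_def B by (intro arg_cong[where f=card]) auto
    then show ?thesis using sl_nth_idx[OF finB] B r by auto
  qed
  show "sorted_list_of_set B ! k = sorted_list_of_set A ! k" if k: "k < r" for k
  proof -
    have kA: "k < card A" using k rle by simp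
    let ?y = "sorted_list_of_set A ! k"
    have y: "?y \<in> A" "idx A ?y = k" using nth_idx[OF fin kA] by auto
    have "?y < x"
    proof (rule ccontr)
      assume "\<not> ?y < x"
      then have "x < ?y" using y xA by (metis linorder_neqE_nat)
      then have "idx A x \<le> idx A ?y" by (intro idx_mono_le[OF fin]) simp
      then show False using y k r by simp
    qed
    then have "idx B ?y = idx A ?y" unfolding idx_def B by (intro arg_cong[where f=card]) auto
    then show ?thesis using nth_eq_iff[OF finB, of k ?y] cB kA y B by auto
  qed
  show "sorted_list_of_set B ! Suc k = sorted_list_of_set A ! k" if k: "r \<le> k" "k < card A" for k
  proof -
    let ?y = "sorted_list_of_set A ! k"
    have y: "?y \<in> A" "idx A ?y = k" using nth_idx[OF fin k(2)] by auto
    have "x < ?y"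
    proof (rule ccontr)
      assume "\<not> x < ?y"
      then have "?y < x" using y xA by (metis linorder_neqE_nat)
      then have "idx A ?y < idx A x" by (intro idx_mono[OF fin y(1)])
      then show False using y k r by simp
    qed
    then have "{z\<in>B. z < ?y} = insert x {z\<in>A. z < ?y}" using B by auto
    then have "idx B ?y = Suc (idx A ?y)" unfolding idx_def using fin xA by simp
    then show ?thesis using nth_eq_iff[OF finB, of "Suc k" ?y] cB k y B by auto
  qed
qed

lemma asc_take_eq:
  "k \<le> length s \<Longrightarrow> asc (take k s) = card {i. Suc i < k \<and> s!i < s!(Suc i)}"
  unfolding asc_def by (intro arg_cong[where f=card]) auto

lemma asc_take_Suc:
  "asc (take (Suc j) s) = asc (take j s) + (if 0<j \<and> j < length s \<and> s!(j-1) < s!j then 1 else 0)"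
proof (cases "j < length s")
  case False then show ?thesis by simp
next
  case True
  have A: "asc (take (Suc j) s) = card {i. Suc i < Suc j \<and> s!i < s!(Suc i)}"
    using True by (intro asc_take_eq) simp
  have B: "asc (take j s) = card {i. Suc i < j \<and> s!i < s!(Suc i)}"
    using True by (intro asc_take_eq) simp
  show ?thesis
  proof (cases "0<j \<and> s!(j-1) < s!j")
    case c: True
    have "{i. Suc i < Suc j \<and> s!i < s!(Suc i)} = insert (j-1) {i. Suc i < j \<and> s!i < s!(Suc i)}"
      using c by (cases j) (auto simp: less_Suc_eq)
    moreover have "finite {i. Suc i < j \<and> s!i < s!(Suc i)}" by (rule finite_subset[of _ "{..<j}"]) auto
    ultimately show ?thesis using A B c True by simp
  next
    case c: False
    have "{i. Suc i < Suc j \<and> s!i < s!(Suc i)} = {i. Suc i < j \<and> s!i < s!(Suc i)}"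
      using c by (cases j) (auto simp: less_Suc_eq)
    then show ?thesis using A B c by simp
  qed
qed

lemma asc_take_le: "asc (take j s) \<le> j - 1"
proof -
  have "asc (take j s) = card {i. Suc i < length (take j s) \<and> take j s ! i < take j s ! Suc i}"
    unfolding asc_def by simp
  also have "\<dots> \<le> card {..<j-1}" by (intro card_mono) auto
  finally show ?thesis by simp
qed

lemma asc_take_mono: "k \<le> l \<Longrightarrow> asc (take k s) \<le> asc (take l s)"
proof (induction l)
  case 0 then show ?case by simp
next
  case (Suc l)
  then show ?case
    by (cases "k = Suc l") (auto simp: asc_take_Suc[of l s] intro: le_trans)
qed

lemma asc_take_add: "k \<le> l \<Longrightarrow> asc (take l s) \<le> asc (take k s) + (l - k)"
proof (induction l)
  case 0 then show ?case by simp
next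
  case (Suc l)
  then show ?case
    by (cases "k = Suc l") (auto simp: asc_take_Suc[of l s])
qed

lemma asc_cong_take:
  assumes "length s = length t" "\<And>i. Suc i < length s \<Longrightarrow> (s!i < s!(Suc i) \<longleftrightarrow> t!i < t!(Suc i))"
  shows "asc (take k s) = asc (take k t)"
proof -
  have "asc (take k s) = asc (take (min k (length s)) s)" by (simp add: min_def)
  also have "\<dots> = card {i. Suc i < min k (length s) \<and> s!i < s!(Suc i)}" by (intro asc_take_eq) simp
  also have "\<dots> = card {i. Suc i < min k (length s) \<and> t!i < t!(Suc i)}"
    using assms(2) by (intro arg_cong[where f=card]) auto
  also have "\<dots> = asc (take (min k (length t)) t)" using asc_take_eq[of "min k (length t)" t] assms(1) by simp
  also have "\<dots> = asc (take k t)" by (simp add: min_def)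
  finally show ?thesis .
qed

lemma asc_cong:
  assumes "length s = length t" "\<And>i. Suc i < length s \<Longrightarrow> (s!i < s!(Suc i) \<longleftrightarrow> t!i < t!(Suc i))"
  shows "asc s = asc t"
  using asc_cong_take[OF assms, of "length s"] assms(1) by simp

lemma entry_le_asc:
  assumes "ascent_seq s" "j < length s" shows "s!j \<le> asc (take (Suc j) s)"
  using assms(2)
proof (induction j)
  case 0 then show ?case using assms(1) unfolding ascent_seq_def by simp
next
  case (Suc j)
  have c: "s ! Suc j \<le> asc (take (Suc j) s) + 1" using assms(1) Suc.prems unfolding ascent_seq_def by auto
  show ?case
  proof (cases "s!j < s!(Suc j)")
    case True
    then show ?thesis using c Suc.prems asc_take_Suc[of "Suc j" s] by simp
  next
    case False
    then have "s!(Suc j) \<le> asc (take (Suc j) s)" using Suc by simp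
    then show ?thesis using asc_take_mono[of "Suc j" "Suc (Suc j)" s] by simp
  qed
qed

lemma entry_le_idx:
  assumes "ascent_seq s" "j < length s" shows "s!j \<le> j"
  using entry_le_asc[OF assms] asc_take_le[of "Suc j" s] by simp

lemma masc_ascent:
  assumes "ascent_seq s" "Suc j < length s" "s!(Suc j) = asc (take (Suc j) s) + 1"
  shows "s!j < s!(Suc j)"
  using entry_le_asc[OF assms(1), of j] assms by simp

lemma asc_butlast:
  assumes "2 \<le> length s"
  shows "asc s = asc (butlast s) + (if s!(length s - 2) < s!(length s - 1) then 1 else 0)"
proof -
  obtain j where j: "length s = Suc j" "0 < j" using assms by (cases "length s") auto
  have "asc s = asc (take (Suc j) s)" using j by simp
  also have "\<dots> = asc (take j s) + (if 0<j \<and> j < length s \<and> s!(j-1) < s!j then 1 else 0)"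
    by (rule asc_take_Suc)
  finally show ?thesis using j by (simp add: butlast_conv_take numeral_2_eq_2)
qed

lemma fixed_prefix:
  assumes asq: "ascent_seq s" and i: "i < length s" "s!i = i"
  shows "j \<le> i \<Longrightarrow> s!j = j"
proof (induction j)
  case 0 then show ?case using asq unfolding ascent_seq_def by simp
next
  case (Suc j)
  show ?case
  proof (cases "Suc j = i")
    case True then show ?thesis using i by simp
  next
    case False
    then have lt: "Suc j < i" using Suc.prems by simp
    have "s!i \<le> asc (take i s) + 1" using asq i(1) lt unfolding ascent_seq_def by (metis One_nat_def Suc_leI le0 le_less_trans not_less_eq_eq)
    then have ci: "i \<le> asc (take i s) + 1" using i by simp
    have "asc (take i s) \<le> asc (take k s) + (i - k)" if "k \<le> i" for k using asc_take_add that by blast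
    from this[of "Suc (Suc j)"] this[of "Suc j"] ci lt
    have a1: "Suc j \<le> asc (take (Suc (Suc j)) s)" "j \<le> asc (take (Suc j) s)" by auto
    have a2: "asc (take (Suc (Suc j)) s) \<le> Suc j" "asc (take (Suc j) s) \<le> j"
      using asc_take_le[of "Suc (Suc j)" s] asc_take_le[of "Suc j" s] by auto
    have "s!j < s!(Suc j)" using asc_take_Suc[of "Suc j" s] a1 a2 lt i by (auto split: if_splits)
    then show ?thesis using Suc entry_le_idx[OF asq, of "Suc j"] lt i by simp
  qed
qed

lemma maxst_prefix:
  assumes asq: "ascent_seq s" and k: "k < maxst s"
  shows "k < length s \<and> s!k = k"
proof (rule ccontr)
  assume nk: "\<not> (k < length s \<and> s!k = k)"
  have "{i. i < length s \<and> s!i = i} \<subseteq> {..<k}"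
  proof
    fix i assume i: "i \<in> {i. i < length s \<and> s!i = i}"
    show "i \<in> {..<k}"
    proof (rule ccontr)
      assume "i \<notin> {..<k}"
      then have "k \<le> i" by simp
      then show False using fixed_prefix[OF asq, of i k] i nk by auto
    qed
  qed
  then have "maxst s \<le> k" unfolding maxst_def by (metis card_lessThan card_mono finite_lessThan)
  then show False using k by simp
qed

definition RS :: "nat list \<Rightarrow> nat set" where
  "RS s = {i. i < length s \<and> (\<forall>j. i < j \<and> j < length s \<longrightarrow> s ! i < s ! j)}"

lemma RS_sub: "RS s \<subseteq> {..<length s}" unfolding RS_def by auto
lemma finite_RS: "finite (RS s)" using RS_sub finite_subset by blast
lemma card_RS_le: "card (RS s) \<le> length s"
  using card_mono[OF _ RS_sub] by fastforce
lemma rmin_card: "rmin s = card (RS s)"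
  unfolding rmin_def rmin_positions_def RS_def[symmetric] using finite_RS by simp
lemma Prm_eq: "Prm s k = sorted_list_of_set (RS s) ! k"
  unfolding Prm_def rmin_positions_def RS_def ..
lemma last_RS: "0 < length s \<Longrightarrow> length s - 1 \<in> RS s"
  unfolding RS_def by auto

lemma RS_D: "i \<in> RS s \<Longrightarrow> i < j \<Longrightarrow> j < length s \<Longrightarrow> s!i < s!j"
  unfolding RS_def by auto

lemma Prm_props:
  assumes "k < rmin s"
  shows "Prm s k \<in> RS s" "idx (RS s) (Prm s k) = k" "Prm s k < length s"
  using nth_idx[OF finite_RS, of k s] assms RS_sub unfolding Prm_eq rmin_card by auto

lemma Prm_of_idx:
  assumes "x \<in> RS s" shows "Prm s (idx (RS s) x) = x"
  unfolding Prm_eq using sl_nth_idx[OF finite_RS assms] .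

lemma Prm_less:
  assumes "k < l" "l < rmin s" shows "Prm s k < Prm s l"
proof (rule ccontr)
  assume "\<not> Prm s k < Prm s l"
  then have "Prm s l \<le> Prm s k" by simp
  then have "idx (RS s) (Prm s l) \<le> idx (RS s) (Prm s k)" by (intro idx_mono_le[OF finite_RS])
  then show False using Prm_props[of l s] Prm_props[of k s] assms by simp
qed

lemma Prm_le:
  assumes "k \<le> l" "l < rmin s" shows "Prm s k \<le> Prm s l"
  using Prm_less[of k l s] assms by (cases "k = l") auto

lemma Rmin_less:
  assumes "k < l" "l < rmin s" shows "Rmin s k < Rmin s l"
  unfolding Rmin_def using RS_D[OF Prm_props(1) Prm_less[OF assms] Prm_props(3)] assms by simp

lemma later_rmin:
  assumes "j < length s" "j \<notin> RS s"
  shows "\<exists>i\<in>RS s. j < i \<and> s!i \<le> s!j"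
  using assms
proof (induction "length s - j" arbitrary: j rule: less_induct)
  case less
  obtain j' where j': "j < j'" "j' < length s" "s!j' \<le> s!j"
    using less.prems unfolding RS_def by (auto simp: not_less)
  show ?case
  proof (cases "j' \<in> RS s")
    case True then show ?thesis using j' by auto
  next
    case False
    then obtain i where "i \<in> RS s" "j' < i" "s!i \<le> s!j'"
      using less.hyps[of j'] j' False by (meson diff_less_mono2 less_trans)
    then show ?thesis using j' by (meson le_trans less_trans)
  qed
qed

lemma suffix_min:
  assumes x: "x \<in> RS s" and j: "j < length s" and h: "\<forall>y\<in>RS s. y < x \<longrightarrow> y < j"
  shows "s!x \<le> s!j"
proof (cases "x \<le> j")
  case True
  then show ?thesis using RS_D[OF x, of j] j by (cases "x = j") auto
next
  case False
  then have jx: "j < x" by simp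
  have "j \<notin> RS s" using h jx by auto
  then obtain i where i: "i \<in> RS s" "j < i" "s!i \<le> s!j" using later_rmin[OF j] by auto
  have "\<not> i < x" using h i by auto
  have "i < length s" using i(1) RS_sub by blast
  then have "s!x \<le> s!i" using RS_D[OF x, of i] \<open>\<not> i < x\<close> by (cases "x = i") auto
  then show ?thesis using i by simp
qed

lemma suffix_min_Prm:
  assumes k: "k < rmin s" and j: "j < length s" and h: "k = 0 \<or> Prm s (k - 1) < j"
  shows "Rmin s k \<le> s!j"
  unfolding Rmin_def
proof (rule suffix_min[OF Prm_props(1)[OF k] j], intro ballI impI)
  fix y assume y: "y \<in> RS s" "y < Prm s k"
  have iy: "idx (RS s) y < k" using idx_mono[OF finite_RS y] Prm_props(2)[OF k] by simp
  then have k0: "k \<noteq> 0" by simp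
  have "y \<le> Prm s (k - 1)"
  proof (rule ccontr)
    assume "\<not> y \<le> Prm s (k - 1)"
    then have "idx (RS s) (Prm s (k - 1)) < idx (RS s) y"
      using idx_mono[OF finite_RS Prm_props(1)[of "k-1" s]] k by simp
    then show False using Prm_props(2)[of "k-1" s] k iy by simp
  qed
  then show "y < j" using h k0 by simp
qed

lemma rpos_props:
  assumes "rmin s \<noteq> length s"
  shows "\<And>m. m < rmin s \<Longrightarrow> rpos_cond s m \<Longrightarrow> m \<le> rpos s"
    "(\<exists>m<rmin s. rpos_cond s m) \<Longrightarrow> rpos_cond s (rpos s) \<and> rpos s < rmin s"
proof -
  fix m assume m: "m < rmin s" "rpos_cond s m"
  then have ex: "\<exists>m<rmin s. rpos_cond s m" by blast
  have "rpos s = (GREATEST m. m < rmin s \<and> rpos_cond s m)" unfolding rpos_def using assms ex by simp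
  then show "m \<le> rpos s" using Greatest_le_nat[of "\<lambda>m. m < rmin s \<and> rpos_cond s m" m "rmin s"] m by auto
next
  assume ex: "\<exists>m<rmin s. rpos_cond s m"
  have e: "rpos s = (GREATEST m. m < rmin s \<and> rpos_cond s m)" unfolding rpos_def using assms ex by simp
  obtain m where "m < rmin s" "rpos_cond s m" using ex by blast
  then show "rpos_cond s (rpos s) \<and> rpos s < rmin s"
    using GreatestI_nat[of "\<lambda>m. m < rmin s \<and> rpos_cond s m" m "rmin s"] e by auto
qed

lemma rpos_eq:
  assumes "rmin s \<noteq> length s" "r < rmin s" "rpos_cond s r"
    "\<And>m. r < m \<Longrightarrow> m < rmin s \<Longrightarrow> \<not> rpos_cond s m"
  shows "rpos s = r"
proof -
  have "rpos_cond s (rpos s) \<and> rpos s < rmin s" using rpos_props(2)[OF assms(1)] assms(2,3) by blast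
  moreover have "r \<le> rpos s" using rpos_props(1)[OF assms(1) assms(2,3)] .
  ultimately show ?thesis using assms(4)[of "rpos s"] by (cases "r = rpos s") auto
qed

locale F =
  fixes s :: "nat list" and n r p j1 m k :: nat
  assumes asq: "ascent_seq s" and len: "length s = n"
    and lenr: "n \<noteq> rmin s + 1" and nM: "\<not> last_Masc s"
    and r_def: "rpos s = r" and rlt: "r < rmin s" and p_def: "Prm s r = p"
    and sj1: "s!j1 = s!p" and sucj1: "Suc j1 < p"
    and ge: "\<And>j. j1 \<le> j \<Longrightarrow> j < n \<Longrightarrow> s!p \<le> s!j"
    and occ: "\<And>j. j1 < j \<Longrightarrow> j < p \<Longrightarrow> s!j \<noteq> s!p"
    and m_def: "sebr s = m" and k: "j1 < k" "k < p" "s!k = m"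
    and mmin: "\<And>j. j1 < j \<Longrightarrow> j < p \<Longrightarrow> m \<le> s!j"
    and m0: "m \<noteq> 0"
    and after: "\<And>j. p < j \<Longrightarrow> j < n \<Longrightarrow> m < s!j"
begin

definition "t = s[p := m]"
abbreviation "v \<equiv> s!p"

lemma pR: "p \<in> RS s" "idx (RS s) p = r" "p < n"
  using Prm_props[OF rlt] p_def len by auto

lemma lent: "length t = n" unfolding t_def using len by simp
lemma t_nth: "i \<noteq> p \<Longrightarrow> t!i = s!i" unfolding t_def by simp
lemma t_p: "t!p = m" unfolding t_def using pR len by simp

lemma between: "j1 < j \<Longrightarrow> j < p \<Longrightarrow> v < s!j"
  using ge[of j] occ[of j] pR by fastforce

lemma vm: "v < m" using between[OF k(1,2)] k by simp

lemma after_v: "p < j \<Longrightarrow> j < n \<Longrightarrow> v < s!j"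
  using RS_D[OF pR(1)] len by simp

lemma j1_notR: "j1 \<notin> RS s"
  using sj1 sucj1 RS_D[of j1 s p] pR len by auto

lemma RS_t: "RS t = insert j1 (RS s)"
proof (rule set_eqI)
  fix i
  show "i \<in> RS t \<longleftrightarrow> i \<in> insert j1 (RS s)"
  proof (cases "i < n")
    case False then show ?thesis using RS_sub[of t] RS_sub[of s] lent len sucj1 pR by auto
  next
    case iN: True
    consider "p < i" | "i = p" | "j1 < i \<and> i < p" | "i = j1" | "i < j1" by linarith
    then show ?thesis
    proof cases
      case 1
      then show ?thesis using iN t_nth lent len sucj1 unfolding RS_def by auto
    next
      case 2
      have "p \<in> RS t" unfolding RS_def using lent t_p t_nth after pR by auto
      then show ?thesis using 2 pR by simp
    next
      case 3
      have "i \<notin> RS s" using between[of i] 3 RS_D[of i s p] pR len by fastforce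
      moreover have "i \<notin> RS t" using mmin[of i] 3 RS_D[of i t p] pR lent t_nth t_p by fastforce
      ultimately show ?thesis using 3 by simp
    next
      case 4
      have "j1 \<in> RS t" unfolding RS_def
      proof (intro CollectI conjI allI impI)
        show "j1 < length t" using lent pR sucj1 by simp
        fix j assume j: "j1 < j \<and> j < length t"
        consider "j < p" | "j = p" | "p < j" by linarith
        then show "t!j1 < t!j"
        proof cases
          case 1 then show ?thesis using between[of j] j t_nth sj1 sucj1 by simp
        next
          case 2 then show ?thesis using t_p vm t_nth sj1 sucj1 by simp
        next
          case 3 then show ?thesis using after_v[of j] j t_nth sj1 sucj1 lent by simp
        qed
      qed
      then show ?thesis using 4 by simp
    next
      case 5
      have ip: "i \<noteq> p" "i \<noteq> j1" using 5 sucj1 by auto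
      have "i \<in> RS s \<longleftrightarrow> i \<in> RS t"
      proof
        assume iR: "i \<in> RS s"
        show "i \<in> RS t" unfolding RS_def
        proof (intro CollectI conjI allI impI)
          show "i < length t" using iN lent by simp
          fix j assume j: "i < j \<and> j < length t"
          show "t!i < t!j"
          proof (cases "j = p")
            case True
            then show ?thesis using RS_D[OF iR, of p] j lent len t_p t_nth[OF ip(1)] vm by simp
          next
            case False
            then show ?thesis using RS_D[OF iR, of j] j lent len t_nth[OF ip(1)] t_nth by simp
          qed
        qed
      next
        assume iR: "i \<in> RS t"
        show "i \<in> RS s" unfolding RS_def
        proof (intro CollectI conjI allI impI)
          show "i < length s" using iN len by simp
          fix j assume j: "i < j \<and> j < length s"
          show "s!i < s!j"
          proof (cases "j = p")
            case True
            then show ?thesis using RS_D[OF iR, of j1] 5 lent pR sucj1 t_nth[OF ip(1)] t_nth[of j1] sj1 by simp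
          next
            case False
            then show ?thesis using RS_D[OF iR, of j] j lent len t_nth[OF ip(1)] t_nth by simp
          qed
        qed
      qed
      then show ?thesis using ip by simp
    qed
  qed
qed

lemma idx_j1: "idx (RS s) j1 = r"
proof -
  have "{y\<in>RS s. y<j1} = {y\<in>RS s. y<p}"
  proof (rule set_eqI, rule iffI)
    fix y assume y: "y \<in> {y\<in>RS s. y<p}"
    have "\<not> (j1 \<le> y)"
    proof
      assume "j1 \<le> y"
      moreover have "y \<noteq> j1" using y j1_notR by auto
      ultimately have "j1 < y" by simp
      then show False using between[of y] y RS_D[of y s p] pR len by fastforce
    qed
    then show "y \<in> {y\<in>RS s. y<j1}" using y by simp
  qed (use sucj1 in auto)
  then show ?thesis using pR unfolding idx_def by simp
qed

lemmas sh = shift[OF finite_RS RS_t j1_notR idx_j1]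

lemma rmin_t: "rmin t = Suc (rmin s)" using sh(1) by (simp add: rmin_card)
lemma Prm_t_lt: "i < r \<Longrightarrow> Prm t i = Prm s i" using sh(2) by (simp add: Prm_eq)
lemma Prm_t_r: "Prm t r = j1" using sh(3) by (simp add: Prm_eq)
lemma Prm_t_Suc: "r \<le> i \<Longrightarrow> i < rmin s \<Longrightarrow> Prm t (Suc i) = Prm s i"
  using sh(4) by (simp add: Prm_eq rmin_card)

lemma rmin_s_ne: "rmin s \<noteq> length s"
  using rmin_t card_RS_le[of t] lent len by (simp add: rmin_card)

lemma rpos_t: "rpos t = Suc r"
proof (rule rpos_eq)
  show "rmin t \<noteq> length t" using rmin_t lenr lent by simp
  show "Suc r < rmin t" using rmin_t rlt by simp
  have Rm: "Rmin t (Suc r) = m" unfolding Rmin_def using Prm_t_Suc[of r] rlt p_def t_p by simp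
  have "{k, p} \<subseteq> {j. j < length t \<and> (Suc r = 0 \<or> Prm t (Suc r - 1) < j) \<and> t ! j = Rmin t (Suc r)}"
    using k Rm Prm_t_r t_nth t_p pR lent sucj1 by auto
  moreover have "card {k, p} = 2" using k by simp
  ultimately show "rpos_cond t (Suc r)" unfolding rpos_cond_def
    by (metis (no_types, lifting) card_mono finite_subset RS_sub finite_lessThan mem_Collect_eq subsetI lessThan_iff)
  fix i assume i: "Suc r < i" "i < rmin t"
  obtain i' where i': "i = Suc i'" "r < i'" "i' < rmin s" using i rmin_t by (cases i) auto
  have P1: "Prm t (i - 1) = Prm s (i' - 1)" using Prm_t_Suc[of "i' - 1"] i' by simp
  have P2: "Prm t i = Prm s i'" using Prm_t_Suc[of i'] i' by simp
  have pl: "p \<le> Prm s (i' - 1)" using Prm_le[of r "i' - 1" s] i' p_def by simp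
  have pl2: "p < Prm s i'" using Prm_less[of r i' s] i' p_def by simp
  have "rpos_cond t i = rpos_cond s i'"
    unfolding rpos_cond_def Rmin_def P1 P2 using i' pl pl2 t_nth lent len
    by (intro arg_cong[where f="\<lambda>x. 2 \<le> x"] arg_cong[where f=card]) auto
  moreover have "\<not> rpos_cond s i'" using rpos_props(1)[OF rmin_s_ne, of i'] i' r_def by auto
  ultimately show "\<not> rpos_cond t i" by simp
qed

lemma ind: "Suc i < length s \<Longrightarrow> (s!i < s!(Suc i) \<longleftrightarrow> t!i < t!(Suc i))"
proof -
  assume i: "Suc i < length s"
  consider "i = p" | "Suc i = p" | "i \<noteq> p \<and> Suc i \<noteq> p" by blast
  then show ?thesis
  proof cases
    case 1
    then show ?thesis using after[of "Suc i"] after_v[of "Suc i"] i len t_p t_nth by simp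
  next
    case 2
    then have "j1 < i" using sucj1 by simp
    then show ?thesis using between[of i] mmin[of i] 2 t_p t_nth by simp
  next
    case 3 then show ?thesis using t_nth by simp
  qed
qed

lemma asc_take_t: "asc (take i t) = asc (take i s)"
  using asc_cong_take[of t s i] ind lent len by simp

lemma asc_t: "asc t = asc s"
  using asc_cong[of t s] ind lent len by simp

lemma ascent_t: "ascent_seq t"
  unfolding ascent_seq_def
proof (intro conjI allI impI)
  show "t \<noteq> []" using lent pR by auto
  show "t!0 = 0" using t_nth[of 0] sucj1 asq unfolding ascent_seq_def by simp
  fix i assume i: "1 \<le> i \<and> i < length t"
  show "t!i \<le> asc (take i t) + 1"
  proof (cases "i = p")
    case True
    have "m \<le> asc (take (Suc k) s)" using entry_le_asc[OF asq, of k] k len pR by simp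
    also have "\<dots> \<le> asc (take p s)" using asc_take_mono k by simp
    finally show ?thesis using True t_p asc_take_t by simp
  next
    case False
    then show ?thesis using asq i t_nth asc_take_t lent len unfolding ascent_seq_def by simp
  qed
qed

lemma n2: "2 \<le> n" using sucj1 pR by simp

lemma t_not_id: "t \<noteq> [0..<length t]"
proof
  assume e0: "t = [0..<length t]"
  then have e: "t = [0..<n]" using lent by simp
  have "t!k = [0..<n]!k" "t!p = [0..<n]!p" by (simp only: e)+
  then have "t!k = k" "t!p = p" using k pR by simp_all
  then show False using k t_p t_nth[of k] by simp
qed

lemma t_notP1: "t \<notin> P1"
proof
  assume "t \<in> P1"
  then have a: "t!(n-2) < t!(n-1)" "t!(n-1) = asc t" unfolding P1_def using lent by auto
  have nn: "Suc (n-2) = n-1" "Suc (n-2) < n" using n2 by auto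
  have sa: "s!(n-2) < s!(n-1)" using ind[of "n-2"] a nn len by simp
  have pn: "p \<noteq> n - 1"
  proof
    assume "p = n - 1"
    then have e0: "Suc (n-2) = p" using nn by simp
    then have e1: "n - 1 = p" using nn by simp
    have "v < s!(n-2)" using between[of "n-2"] e0 sucj1 by simp
    then show False using sa e1 by simp
  qed
  have "asc s = asc (butlast s) + 1" using asc_butlast[of s] sa len n2 by simp
  moreover have "s \<noteq> []" using len n2 by auto
  ultimately have "last s = asc (butlast s) + 1" using a t_nth[of "n-1"] pn asc_t len n2 by (simp add: last_conv_nth)
  then show False using nM unfolding last_Masc_def by simp
qed

lemma t_target: "t \<in> {s \<in> Aset n \<inter> P1c. rpos s \<noteq> 0}"
  using ascent_t t_not_id t_notP1 lent rpos_t unfolding Aset_def P1c_def Astar_def by auto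

lemma g_t: "t[Prm t (rpos t) := Rmin t (rpos t - 1)] = s"
proof -
  have "Prm t (rpos t) = p" using rpos_t Prm_t_Suc[of r] rlt p_def by simp
  moreover have "Rmin t (rpos t - 1) = v" using rpos_t Prm_t_r t_nth[of j1] sj1 sucj1 unfolding Rmin_def by simp
  ultimately show ?thesis unfolding t_def by simp
qed

lemma set_t: "set t = set s"
proof
  show "set t \<subseteq> set s"
  proof
    fix x assume "x \<in> set t"
    then obtain i where i: "i < n" "t!i = x" by (auto simp: in_set_conv_nth lent)
    show "x \<in> set s"
    proof (cases "i = p")
      case True
      then have "x = s!k" using i k t_p by simp
      moreover have "k < length s" using k pR len by simp
      ultimately show ?thesis by simp
    next
      case False then show ?thesis using i t_nth len by (metis nth_mem)
    qed
  qed
  show "set s \<subseteq> set t"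
  proof
    fix x assume "x \<in> set s"
    then obtain i where i: "i < n" "s!i = x" by (auto simp: in_set_conv_nth len)
    show "x \<in> set t"
    proof (cases "i = p")
      case True
      then have "x = t!j1" using i sj1 t_nth[of j1] sucj1 by simp
      then show ?thesis using sucj1 pR lent by simp
    next
      case False then show ?thesis using i t_nth lent by (metis nth_mem)
    qed
  qed
qed

lemma rep_t: "rep s = rep t" unfolding rep_def using set_t len lent by simp

lemma maxst_t: "maxst s = maxst t"
proof -
  have "s!p \<noteq> p" using sj1 entry_le_idx[OF asq, of j1] sucj1 pR len by simp
  moreover have "t!p \<noteq> p" using t_p k entry_le_idx[OF asq, of k] pR len by simp
  ultimately have "{i. i < length s \<and> s ! i = i} = {i. i < length t \<and> t ! i = i}"
    using t_nth len lent by (intro set_eqI) (case_tac "x = p", auto)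
  then show ?thesis unfolding maxst_def by simp
qed

lemma zero_t: "zero s = zero t + of_bool (r = 0)"
proof (cases "r = 0")
  case True
  have "Rmin s 0 \<le> s!0" using suffix_min_Prm[of 0 s 0] rlt True len pR by simp
  then have v0: "v = 0" using True p_def asq unfolding Rmin_def ascent_seq_def by simp
  have "{i. i < length s \<and> s!i = 0} = insert p {i. i < length t \<and> t!i = 0}"
    using v0 t_nth t_p m0 len lent pR by (intro set_eqI) (case_tac "x = p", auto)
  moreover have "p \<notin> {i. i < length t \<and> t!i = 0}" using t_p m0 by simp
  ultimately show ?thesis unfolding zero_def using True by simp
next
  case False
  have "Rmin s (r-1) < Rmin s r" using Rmin_less[of "r-1" r s] False rlt by simp
  then have "v \<noteq> 0" using p_def unfolding Rmin_def by simp
  then have "{i. i < length s \<and> s!i = 0} = {i. i < length t \<and> t!i = 0}"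
    using t_nth t_p m0 len lent by (intro set_eqI) (case_tac "x = p", auto)
  then show ?thesis unfolding zero_def using False by simp
qed

lemma ealm_t: "int (ealm s) = int (ealm t) - of_bool (Prm s r = maxst s)"
proof -
  define M where "M = maxst s"
  have Mt: "maxst t = M" using maxst_t M_def by simp
  show ?thesis
  proof (cases "M = n")
    case True
    have "ealm s = 0" unfolding ealm_def using True len M_def by simp
    moreover have "ealm t = 0" unfolding ealm_def using True lent Mt by simp
    moreover have "p \<noteq> M" using True pR by simp
    ultimately show ?thesis using p_def M_def by simp
  next
    case False
    have es: "ealm s = s!M" unfolding ealm_def using False len M_def by simp
    have et: "ealm t = t!M" unfolding ealm_def using False lent Mt by simp
    show ?thesis
    proof (cases "p = M")
      case True
      have pre: "\<And>i. i < p \<Longrightarrow> s!i = i" using maxst_prefix[OF asq] True M_def by blast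
      have "s!j1 = j1" using pre[of j1] sucj1 by simp
      then have vj: "v = j1" using sj1 by simp
      have a1: "m \<le> Suc j1" using mmin[of "Suc j1"] pre[of "Suc j1"] sucj1 by simp
      have a2: "Suc j1 \<le> m" using k pre[of k] by simp
      have "ealm t = Suc j1" using et True t_p a1 a2 by simp
      moreover have "ealm s = j1" using es True vj by simp
      ultimately show ?thesis using True p_def M_def by simp
    next
      case False2: False
      have "M \<noteq> p" using False2 by simp
      then have "ealm t = ealm s" using es et t_nth by simp
      then show ?thesis using False2 p_def M_def by simp
    qed
  qed
qed

end

lemma F_intro:
  assumes sT: "s \<in> T4" and sA: "s \<in> Aset n"
  shows "\<exists>r p j1 m k. F s n r p j1 m k"
proof -
  have asq: "ascent_seq s" and len: "length s = n" using sA unfolding Aset_def by auto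
  have lenr: "n \<noteq> rmin s + 1" and nM: "\<not> last_Masc s" and se0: "sebr s \<noteq> 0" and slt: "sebr_lt s"
    using sT len unfolding T4_def by auto
  have sne: "s \<noteq> []" using asq unfolding ascent_seq_def by simp
  then have n0: "0 < n" using len by (metis length_greater_0_conv)
  define r where "r = rpos s"
  define v where "v = Rmin s r"
  define Occ where "Occ = {j. j < n \<and> s!j = v}"
  have finO: "finite Occ" unfolding Occ_def by simp
  have cO: "2 \<le> card Occ"
  proof (rule ccontr)
    assume "\<not> 2 \<le> card Occ"
    then have "sebr s = 0" unfolding sebr_def Let_def Occ_def v_def r_def len by simp
    then show False using se0 by simp
  qed
  have rm0: "0 < rmin s" using last_RS[of s] sne finite_RS[of s] unfolding rmin_card
    by (simp add: card_gt_0_iff) blast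
  have cond: "rpos_cond s r \<and> r < rmin s"
  proof (cases "r = 0")
    case True
    have "rpos_cond s 0" unfolding rpos_cond_def using cO unfolding Occ_def v_def True len by simp
    then show ?thesis using True rm0 by simp
  next
    case False
    then have ne: "rmin s \<noteq> length s" and ex: "\<exists>m<rmin s. rpos_cond s m"
      unfolding r_def rpos_def by (auto split: if_splits)
    show ?thesis using rpos_props(2)[OF ne ex] r_def by simp
  qed
  define p where "p = Prm s r"
  have pR: "p \<in> RS s" "idx (RS s) p = r" "p < n" using Prm_props[of r s] cond p_def len by auto
  have vp: "v = s!p" unfolding v_def Rmin_def p_def ..
  have pO: "p \<in> Occ" unfolding Occ_def using pR vp by simp
  have Ole: "\<And>j. j \<in> Occ \<Longrightarrow> j \<le> p"
  proof -
    fix j assume j: "j \<in> Occ"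
    show "j \<le> p"
    proof (rule ccontr)
      assume "\<not> j \<le> p"
      then show False using RS_D[OF pR(1), of j] j vp len unfolding Occ_def by simp
    qed
  qed
  have MaxO: "Max Occ = p" using finO pO Ole by (intro Max_eqI) auto
  have Onp: "Occ - {p} \<noteq> {}"
  proof
    assume "Occ - {p} = {}"
    then have "Occ \<subseteq> {p}" by blast
    then have "card Occ \<le> 1" using card_mono[of "{p}" Occ] by simp
    then show False using cO by simp
  qed
  define j1 where "j1 = Max (Occ - {p})"
  have j1O: "j1 \<in> Occ - {p}" unfolding j1_def using finO Onp by (intro Max_in) auto
  have j1le: "\<And>j. j \<in> Occ - {p} \<Longrightarrow> j \<le> j1" unfolding j1_def using finO by (intro Max_ge) auto
  have j1p: "j1 < p" using j1O Ole by fastforce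
  have sj1: "s!j1 = s!p" using j1O vp unfolding Occ_def by simp
  have prev: "r = 0 \<or> Prm s (r - 1) < j1"
  proof (cases "r = 0")
    case False
    define C where "C = {j. j < length s \<and> (r = 0 \<or> Prm s (r - 1) < j) \<and> s ! j = Rmin s r}"
    have cC: "2 \<le> card C" using cond unfolding rpos_cond_def C_def by simp
    have "C - {p} \<noteq> {}"
    proof
      assume "C - {p} = {}"
      then have "C \<subseteq> {p}" by blast
      then have "card C \<le> 1" using card_mono[of "{p}" C] by simp
      then show False using cC by simp
    qed
    then obtain j' where j': "j' \<in> C" "j' \<noteq> p" by blast
    then have "j' \<in> Occ - {p}" unfolding C_def Occ_def v_def len by simp
    then have "j' \<le> j1" using j1le by simp
    then show ?thesis using j' False unfolding C_def by simp
  qed simp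
  have ge: "\<And>j. j1 \<le> j \<Longrightarrow> j < n \<Longrightarrow> s!p \<le> s!j"
    using suffix_min_Prm[of r s] cond prev len vp v_def by fastforce
  have occ: "\<And>j. j1 < j \<Longrightarrow> j < p \<Longrightarrow> s!j \<noteq> s!p"
  proof
    fix j assume j: "j1 < j" "j < p" "s!j = s!p"
    then have "j \<in> Occ - {p}" unfolding Occ_def using vp pR by simp
    then show False using j1le j by fastforce
  qed
  define B where "B = {s!k |k. j1 < k \<and> k < p}"
  have seb: "sebr s = (if j1 + 1 = p then 0 else Min B)"
    unfolding sebr_def Let_def B_def using cO MaxO
    by (simp add: Occ_def[symmetric] v_def[symmetric] r_def[symmetric] len j1_def)
  have sucj1: "Suc j1 < p" using seb se0 j1p by (cases "Suc j1 = p") auto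
  define m where "m = sebr s"
  have Bim: "B = (\<lambda>k. s!k) ` {j1<..<p}" unfolding B_def by auto
  have finB: "finite B" and neB: "B \<noteq> {}" using Bim sucj1 by auto
  have mB: "m = Min B" unfolding m_def using seb sucj1 by simp
  obtain k where k: "j1 < k" "k < p" "s!k = m" using Min_in[OF finB neB] mB unfolding B_def by auto
  have mmin: "\<And>j. j1 < j \<Longrightarrow> j < p \<Longrightarrow> m \<le> s!j"
    using Min_le[OF finB] mB unfolding B_def by blast
  have after: "\<And>j. p < j \<Longrightarrow> j < n \<Longrightarrow> m < s!j"
  proof -
    fix j assume j: "p < j" "j < n"
    show "m < s!j"
    proof (cases "r + 1 = rmin s")
      case True
      have l: "n - 1 \<in> RS s" using last_RS[of s] n0 len by simp
      have "idx (RS s) p < idx (RS s) (n - 1)" using idx_mono[OF finite_RS pR(1), of "n-1"] j by simp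
      moreover have "idx (RS s) (n - 1) < card (RS s)" using idx_less_card[OF finite_RS l] .
      ultimately show ?thesis using True pR rmin_card[of s] by simp
    next
      case False
      then have r1: "r + 1 < rmin s" using cond by simp
      have "Rmin s (r+1) \<le> s!j" using suffix_min_Prm[of "r+1" s j] r1 j len p_def by simp
      moreover have "m < Rmin s (r+1)" using slt False unfolding sebr_lt_def m_def r_def by simp
      ultimately show ?thesis by simp
    qed
  qed
  have "F s n r p j1 m k"
    by (unfold_locales) (use asq len lenr nM r_def cond p_def sj1 sucj1 ge occ m_def k mmin se0 after in auto)
  then show ?thesis by blast
qed

locale G =
  fixes t :: "nat list" and n r q p k :: nat
  assumes asq: "ascent_seq t" and len: "length t = n" and tP: "t \<notin> P1" and tA: "t \<in> Astar"
    and rpt: "rpos t = Suc r" and rmt: "rmin t \<noteq> n" and lt: "Suc r < rmin t"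
    and maxi: "\<And>i. Suc r < i \<Longrightarrow> i < rmin t \<Longrightarrow> \<not> rpos_cond t i"
    and q_def: "Prm t r = q" and p_def: "Prm t (Suc r) = p"
    and k: "q < k" "k < p" "t!k = t!p"
    and ge: "\<And>j. q < j \<Longrightarrow> j < n \<Longrightarrow> t!p \<le> t!j"
begin

abbreviation "u \<equiv> t!q"
abbreviation "m \<equiv> t!p"
definition "s = t[p := u]"

lemma qR: "q \<in> RS t" "idx (RS t) q = r" "q < n"
  using Prm_props[of r t] lt q_def len by auto
lemma pR: "p \<in> RS t" "idx (RS t) p = Suc r" "p < n"
  using Prm_props[of "Suc r" t] lt p_def len by auto
lemma qp: "q < p" using Prm_less[of r "Suc r" t] lt q_def p_def by simp
lemma um: "u < m" using RS_D[OF qR(1) qp] pR len by simp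
lemma after: "p < j \<Longrightarrow> j < n \<Longrightarrow> m < t!j" using RS_D[OF pR(1)] len by simp

lemma lens: "length s = n" unfolding s_def using len by simp
lemma s_nth: "i \<noteq> p \<Longrightarrow> s!i = t!i" unfolding s_def by simp
lemma s_p: "s!p = u" unfolding s_def using pR len by simp

lemma q_notR: "q \<notin> RS s"
  using RS_D[of q s p] qp s_p s_nth[of q] pR lens by auto

lemma RS_s: "RS t = insert q (RS s)"
proof (rule set_eqI)
  fix i
  show "i \<in> RS t \<longleftrightarrow> i \<in> insert q (RS s)"
  proof (cases "i < n")
    case False then show ?thesis using RS_sub[of t] RS_sub[of s] lens len qR by auto
  next
    case iN: True
    consider "p < i" | "i = p" | "q < i \<and> i < p" | "i = q" | "i < q" by linarith
    then show ?thesis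
    proof cases
      case 1
      then show ?thesis using iN s_nth lens len qp unfolding RS_def by auto
    next
      case 2
      have "p \<in> RS s" unfolding RS_def
      proof (intro CollectI conjI allI impI)
        show "p < length s" using pR lens by simp
        fix j assume j: "p < j \<and> j < length s"
        then have "m < t!j" using after lens by simp
        then show "s!p < s!j" using s_p s_nth[of j] j um by simp
      qed
      then show ?thesis using 2 pR by simp
    next
      case 3
      have "i \<notin> RS t" using ge[of i] 3 RS_D[of i t p] pR len by fastforce
      moreover have "i \<notin> RS s" using ge[of i] um 3 RS_D[of i s p] pR lens s_nth s_p by fastforce
      ultimately show ?thesis using 3 by simp
    next
      case 4
      then show ?thesis using qR by simp
    next
      case 5
      have ip: "i \<noteq> p" "i \<noteq> q" using 5 qp by auto
      have "i \<in> RS s \<longleftrightarrow> i \<in> RS t"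
      proof
        assume iR: "i \<in> RS s"
        show "i \<in> RS t" unfolding RS_def
        proof (intro CollectI conjI allI impI)
          show "i < length t" using iN len by simp
          fix j assume j: "i < j \<and> j < length t"
          show "t!i < t!j"
          proof (cases "j = p")
            case True
            then show ?thesis using RS_D[OF iR, of q] 5 lens qR s_nth[OF ip(1)] s_nth[of q] qp um by simp
          next
            case False
            then show ?thesis using RS_D[OF iR, of j] j lens len s_nth[OF ip(1)] s_nth by simp
          qed
        qed
      next
        assume iR: "i \<in> RS t"
        show "i \<in> RS s" unfolding RS_def
        proof (intro CollectI conjI allI impI)
          show "i < length s" using iN lens by simp
          fix j assume j: "i < j \<and> j < length s"
          show "s!i < s!j"
          proof (cases "j = p")
            case True
            then show ?thesis using RS_D[OF iR, of q] 5 len qR s_nth[OF ip(1)] s_p by simp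
          next
            case False
            then show ?thesis using RS_D[OF iR, of j] j lens len s_nth[OF ip(1)] s_nth by simp
          qed
        qed
      qed
      then show ?thesis using ip by simp
    qed
  qed
qed

lemma idx_q: "idx (RS s) q = r"
proof -
  have "{y\<in>RS s. y<q} = {y\<in>RS t. y<q}" using RS_s by auto
  then show ?thesis using qR unfolding idx_def by simp
qed

lemmas sh = shift[OF finite_RS RS_s q_notR idx_q]

lemma rmin_s: "rmin t = Suc (rmin s)" using sh(1) by (simp add: rmin_card)
lemma Prm_lt: "i < r \<Longrightarrow> Prm t i = Prm s i" using sh(2) by (simp add: Prm_eq)
lemma Prm_Suc: "r \<le> i \<Longrightarrow> i < rmin s \<Longrightarrow> Prm t (Suc i) = Prm s i"
  using sh(4) by (simp add: Prm_eq rmin_card)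
lemma rlt: "r < rmin s" using lt rmin_s by simp
lemma Prm_s_r: "Prm s r = p" using Prm_Suc[of r] rlt p_def by simp

lemma rpos_s: "rpos s = r"
proof (rule rpos_eq)
  show "rmin s \<noteq> length s" using rmin_s card_RS_le[of t] lens len by (simp add: rmin_card)
  show "r < rmin s" by (rule rlt)
  have Rm: "Rmin s r = u" unfolding Rmin_def using Prm_s_r s_p by simp
  have h1: "r \<noteq> 0 \<Longrightarrow> Prm s (r - 1) < q"
    using Prm_lt[of "r-1"] Prm_less[of "r-1" r t] lt q_def by simp
  then have h2: "r \<noteq> 0 \<Longrightarrow> Prm s (r - 1) < p" using qp by fastforce
  have "{q, p} \<subseteq> {j. j < length s \<and> (r = 0 \<or> Prm s (r - 1) < j) \<and> s ! j = Rmin s r}"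
    using Rm s_nth[of q] qp s_p pR lens qR h1 h2 by auto
  moreover have "card {q, p} = 2" using qp by simp
  ultimately show "rpos_cond s r" unfolding rpos_cond_def
    by (metis (no_types, lifting) card_mono finite_subset RS_sub finite_lessThan mem_Collect_eq subsetI lessThan_iff)
  fix i assume i: "r < i" "i < rmin s"
  have P1: "Prm s (i - 1) = Prm t i" using Prm_Suc[of "i - 1"] i by simp
  have P2: "Prm s i = Prm t (Suc i)" using Prm_Suc[of i] i by simp
  have pl: "p \<le> Prm t i" using Prm_le[of "Suc r" i t] i p_def rmin_s by simp
  have pl2: "p < Prm t (Suc i)" using Prm_less[of "Suc r" "Suc i" t] i p_def rmin_s by simp
  have "rpos_cond s i = rpos_cond t (Suc i)"
    unfolding rpos_cond_def Rmin_def P1 P2 using i pl pl2 s_nth lens len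
    by (intro arg_cong[where f="\<lambda>x. 2 \<le> x"] arg_cong[where f=card]) auto
  moreover have "\<not> rpos_cond t (Suc i)" using maxi[of "Suc i"] i rmin_s by simp
  ultimately show "\<not> rpos_cond s i" by simp
qed

lemma sebr_s: "sebr s = m"
proof -
  define Occ where "Occ = {j. j < length s \<and> s ! j = u}"
  have Rm: "Rmin s (rpos s) = u" unfolding Rmin_def rpos_s Prm_s_r using s_p .
  have qO: "q \<in> Occ" and pO: "p \<in> Occ" unfolding Occ_def using s_nth[of q] qp s_p qR pR lens by auto
  have finO: "finite Occ" unfolding Occ_def by simp
  have notO: "\<And>j. q < j \<Longrightarrow> j \<noteq> p \<Longrightarrow> j \<notin> Occ"
  proof
    fix j assume j: "q < j" "j \<noteq> p" "j \<in> Occ"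
    then have "j < n" "s!j = u" unfolding Occ_def using lens by auto
    moreover have "m \<le> t!j" using ge[of j] j \<open>j < n\<close> by simp
    ultimately show False using s_nth[of j] j um by simp
  qed
  have cO: "2 \<le> card Occ" using card_mono[OF finO, of "{q,p}"] qO pO qp by simp
  have MO: "Max Occ = p"
  proof (rule Max_eqI[OF finO _ pO])
    fix y assume "y \<in> Occ"
    then show "y \<le> p" using notO[of y] qp by (cases "q < y") auto
  qed
  have MO2: "Max (Occ - {p}) = q"
  proof (rule Max_eqI)
    show "finite (Occ - {p})" using finO by simp
    show "q \<in> Occ - {p}" using qO qp by simp
    fix y assume "y \<in> Occ - {p}"
    then show "y \<le> q" using notO[of y] by (cases "q < y") auto
  qed
  have qp1: "q + 1 \<noteq> p" using k by simp
  define B where "B = {s ! k |k. q < k \<and> k < p}"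
  have Bim: "B = (\<lambda>k. s!k) ` {q<..<p}" unfolding B_def by auto
  have "Min B = m"
  proof (rule Min_eqI)
    show "finite B" using Bim by simp
    have "m = s!k \<and> q < k \<and> k < p" using k s_nth[of k] by simp
    then show "m \<in> B" unfolding B_def by blast
    fix y assume "y \<in> B"
    then obtain j where "q < j" "j < p" "y = s!j" unfolding B_def by auto
    then show "m \<le> y" using ge[of j] s_nth[of j] pR by simp
  qed
  then show ?thesis
    unfolding sebr_def Let_def Rm Occ_def[symmetric] using cO MO MO2 qp1 B_def by simp
qed

lemma ind: "Suc i < length s \<Longrightarrow> (s!i < s!(Suc i) \<longleftrightarrow> t!i < t!(Suc i))"
proof -
  assume i: "Suc i < length s"
  consider "i = p" | "Suc i = p" | "i \<noteq> p \<and> Suc i \<noteq> p" by blast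
  then show ?thesis
  proof cases
    case 1
    then show ?thesis using after[of "Suc i"] i lens s_p s_nth um by simp
  next
    case 2
    then have "q < i" using k by simp
    then show ?thesis using ge[of i] 2 s_p s_nth um pR by simp
  next
    case 3 then show ?thesis using s_nth by simp
  qed
qed

lemma asc_take_s: "asc (take i s) = asc (take i t)"
  using asc_cong_take[of s t i] ind lens len by simp

lemma ascent_s: "ascent_seq s"
  unfolding ascent_seq_def
proof (intro conjI allI impI)
  show "s \<noteq> []" using lens pR by auto
  show "s!0 = 0" using s_nth[of 0] qp asq unfolding ascent_seq_def by simp
  fix i assume i: "1 \<le> i \<and> i < length s"
  show "s!i \<le> asc (take i s) + 1"
  proof (cases "i = p")
    case True
    have "u \<le> asc (take (Suc q) t)" using entry_le_asc[OF asq, of q] qR len by simp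
    also have "\<dots> \<le> asc (take p t)" using asc_take_mono qp by simp
    finally show ?thesis using True s_p asc_take_s by simp
  next
    case False
    then show ?thesis using asq i s_nth asc_take_s lens len unfolding ascent_seq_def by simp
  qed
qed

lemma s_not_id: "s \<noteq> [0..<length s]"
proof
  assume e0: "s = [0..<length s]"
  then have e: "s = [0..<n]" using lens by simp
  have "s!q = [0..<n]!q" "s!p = [0..<n]!p" by (simp only: e)+
  then have "s!q = q" "s!p = p" using qR pR by simp_all
  then show False using qp s_p s_nth[of q] by simp
qed

lemma n2: "2 \<le> n" using qp pR by simp

lemma s_notM: "\<not> last_Masc s"
proof
  assume "last_Masc s"
  moreover have "s \<noteq> []" using lens n2 by auto
  ultimately have a: "s!(n-1) = asc (take (n-1) s) + 1"
    unfolding last_Masc_def using lens by (simp add: last_conv_nth butlast_conv_take)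
  have nn: "Suc (n-2) = n-1" "Suc (n-2) < n" using n2 by auto
  have sa: "s!(n-2) < s!(n-1)" using masc_ascent[OF ascent_s, of "n-2"] a nn lens by simp
  have pn: "p \<noteq> n - 1"
  proof
    assume "p = n - 1"
    then have e0: "Suc (n-2) = p" using nn by simp
    then have e1: "n - 1 = p" using nn by simp
    have "q < n - 2" using k e0 by simp
    then have "m \<le> t!(n-2)" using ge[of "n-2"] n2 by simp
    then show False using sa e1 s_p s_nth[of "n-2"] e0 um by simp
  qed
  have ta: "t!(n-2) < t!(n-1)" using ind[of "n-2"] sa nn lens by simp
  have "asc t = asc (butlast t) + 1" using asc_butlast[of t] ta len n2 by simp
  moreover have "asc (butlast t) = asc (take (n-1) s)" using asc_take_s len by (simp add: butlast_conv_take)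
  ultimately have "t!(n-1) = asc t" using a s_nth[of "n-1"] pn by simp
  then have "t \<in> P1" using ta tA len unfolding P1_def by simp
  then show False using tP by simp
qed

lemma sebr_lt_s: "sebr_lt s"
  unfolding sebr_lt_def rpos_s sebr_s
proof (cases "r + 1 = rmin s")
  case False
  then have r1: "Suc r < rmin s" using rlt by simp
  have e: "Prm s (Suc r) = Prm t (Suc (Suc r))" using Prm_Suc[of "Suc r"] r1 by simp
  have pl: "p < Prm t (Suc (Suc r))" using Prm_less[of "Suc r" "Suc (Suc r)" t] r1 rmin_s p_def by simp
  have "Rmin s (Suc r) = Rmin t (Suc (Suc r))" unfolding Rmin_def e using s_nth pl by simp
  moreover have "Rmin t (Suc r) < Rmin t (Suc (Suc r))" using Rmin_less[of "Suc r" "Suc (Suc r)" t] r1 rmin_s by simp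
  ultimately show "r + 1 = rmin s \<or> m < Rmin s (r + 1)" using p_def unfolding Rmin_def by simp
qed simp

lemma s_T4: "s \<in> T4 \<inter> Aset n"
  using ascent_s s_not_id lens rmin_s rmt sebr_s um sebr_lt_s s_notM
  unfolding T4_def Astar_def Aset_def by auto

lemma f_s: "s[Prm s (rpos s) := sebr s] = t"
proof -
  have "s[Prm s (rpos s) := sebr s] = s[p := m]" using rpos_s Prm_s_r sebr_s by simp
  also have "\<dots> = t" unfolding s_def by simp
  finally show ?thesis .
qed

end

lemma G_intro:
  assumes tT: "t \<in> {s \<in> Aset n \<inter> P1c. rpos s \<noteq> 0}"
  shows "\<exists>r q p k. G t n r q p k"
proof -
  have asq: "ascent_seq t" and len: "length t = n" and tA: "t \<in> Astar" and tP: "t \<notin> P1"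
    and rp0: "rpos t \<noteq> 0"
    using tT unfolding Aset_def P1c_def by auto
  have ne: "rmin t \<noteq> length t" and ex: "\<exists>m<rmin t. rpos_cond t m"
    using rp0 unfolding rpos_def by (auto split: if_splits)
  have cond: "rpos_cond t (rpos t)" "rpos t < rmin t" using rpos_props(2)[OF ne ex] by auto
  obtain r where r: "rpos t = Suc r" using rp0 by (cases "rpos t") auto
  define q where "q = Prm t r"
  define p where "p = Prm t (Suc r)"
  have pR: "p \<in> RS t" "p < n" using Prm_props[of "Suc r" t] cond r p_def len by auto
  have qp: "q < p" using Prm_less[of r "Suc r" t] cond r q_def p_def by simp
  define C where "C = {j. j < length t \<and> (Suc r = 0 \<or> Prm t (Suc r - 1) < j) \<and> t ! j = Rmin t (Suc r)}"
  have cC: "2 \<le> card C" using cond r unfolding rpos_cond_def C_def by simp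
  have "C - {p} \<noteq> {}"
  proof
    assume "C - {p} = {}"
    then have "C \<subseteq> {p}" by blast
    then have "card C \<le> 1" using card_mono[of "{p}" C] by simp
    then show False using cC by simp
  qed
  then obtain k where kC: "k \<in> C" "k \<noteq> p" by blast
  have kq: "q < k" "t!k = t!p" "k < n" using kC unfolding C_def q_def p_def Rmin_def len by auto
  have kp: "k < p"
  proof (rule ccontr)
    assume "\<not> k < p"
    then have "p < k" using kC by simp
    then show False using RS_D[OF pR(1), of k] kq len by simp
  qed
  have ge: "\<And>j. q < j \<Longrightarrow> j < n \<Longrightarrow> t!p \<le> t!j"
    using suffix_min_Prm[of "Suc r" t] cond r len unfolding q_def p_def Rmin_def by simp
  have maxi: "\<And>i. Suc r < i \<Longrightarrow> i < rmin t \<Longrightarrow> \<not> rpos_cond t i"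
    using rpos_props(1)[OF ne] r by fastforce
  have "G t n r q p k"
    by unfold_locales (use asq len tP tA r ne cond maxi q_def p_def kq kp ge in auto)
  then show ?thesis by blast
qed

theorem mainTheorem12:
  fixes n :: nat
  shows "\<exists>f. bij_betw f (T4 \<inter> Aset n) {s \<in> Aset n \<inter> P1c. rpos s \<noteq> 0} \<and>
    (\<forall>s \<in> T4 \<inter> Aset n.
       asc s = asc (f s) \<and> rep s = rep (f s) \<and> maxst s = maxst (f s) \<and>
       int (rmin s) = int (rmin (f s)) - 1 \<and>
       int (rpos s) = int (rpos (f s)) - 1 \<and>
       zero s = zero (f s) + of_bool (rpos s = 0) \<and>
       int (ealm s) = int (ealm (f s)) - of_bool (Prm s (rpos s) = maxst s))"
proof -
  define f where "f = (\<lambda>s::nat list. s[Prm s (rpos s) := sebr s])"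
  define g where "g = (\<lambda>t::nat list. t[Prm t (rpos t) := Rmin t (rpos t - 1)])"
  have fw: "f s \<in> {s \<in> Aset n \<inter> P1c. rpos s \<noteq> 0} \<and> g (f s) = s \<and>
       asc s = asc (f s) \<and> rep s = rep (f s) \<and> maxst s = maxst (f s) \<and>
       int (rmin s) = int (rmin (f s)) - 1 \<and>
       int (rpos s) = int (rpos (f s)) - 1 \<and>
       zero s = zero (f s) + of_bool (rpos s = 0) \<and>
       int (ealm s) = int (ealm (f s)) - of_bool (Prm s (rpos s) = maxst s)"
    if s: "s \<in> T4 \<inter> Aset n" for s
  proof -
    obtain r p j1 m k where L: "F s n r p j1 m k" using F_intro s by blast
    have ft: "f s = F.t s p m" unfolding f_def F.t_def[OF L] using F.r_def[OF L] F.p_def[OF L] F.m_def[OF L] by simp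
    show ?thesis unfolding ft g_def
      using F.t_target[OF L] F.g_t[OF L] F.asc_t[OF L] F.rep_t[OF L] F.maxst_t[OF L]
        F.rmin_t[OF L] F.rpos_t[OF L] F.zero_t[OF L] F.ealm_t[OF L] F.r_def[OF L]
      by simp
  qed
  have bw: "g t \<in> T4 \<inter> Aset n \<and> f (g t) = t" if t: "t \<in> {s \<in> Aset n \<inter> P1c. rpos s \<noteq> 0}" for t
  proof -
    obtain r q p k where L: "G t n r q p k" using G_intro t by blast
    have gt: "g t = G.s t q p" unfolding g_def G.s_def[OF L] using G.rpt[OF L] G.p_def[OF L] G.q_def[OF L]
      unfolding Rmin_def by simp
    show ?thesis unfolding gt f_def using G.s_T4[OF L] G.f_s[OF L] by simp
  qed
  have "bij_betw f (T4 \<inter> Aset n) {s \<in> Aset n \<inter> P1c. rpos s \<noteq> 0}"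
    by (rule bij_betw_byWitness[where f'=g]) (use fw bw in blast)+
  then show ?thesis using fw by blast
qed

end
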